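(* Let $p=2n+1$ be an odd prime, and write $\{1,\ldots,p-1\}=\{a_1,\ldots,a_n\}\cup\{b_1,\ldots,b_n\}$ with $a_1<\cdots<a_n$ and $b_1<\cdots<b_n$, where $a_1,\ldots,a_n$ are the quadratic residues modulo $p$ and $b_1,\ldots,b_n$ are the quadratic nonresidues modulo $p$ in $\{1,\ldots,p-1\}$. Then $$\prod_{1\le j<k\le n}(a_k-a_j)(b_k-b_j)\equiv\begin{cases}-n!\pmod p&\text{if } p\equiv1\pmod4,\\1\pmod p&\text{if } p\equiv3\pmod4.\end{cases}$$ *)

theory Defs
  imports "HOL-Number_Theory.Number_Theory"
begin

definition qr_list :: "int \<Rightarrow> int list" where
  "qr_list p = sorted_list_of_set {x \<in> {1..p-1}. QuadRes p x}"

definition qnr_list :: "int \<Rightarrow> int list" where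
  "qnr_list p = sorted_list_of_set {x \<in> {1..p-1}. \<not> QuadRes p x}"

end

theory Submission
  imports Defs "HOL-Computational_Algebra.Polynomial"
begin


lemma poly_zero_mod:
  fixes f :: "int poly" and p :: int
  assumes "prime p" "finite S" "\<forall>s\<in>S. [poly f s = 0] (mod p)"
    "\<forall>s\<in>S. \<forall>t\<in>S. [s = t] (mod p) \<longrightarrow> s = t"
    "f = 0 \<or> degree f < card S"
  shows "[poly f x = 0] (mod p)"
  using assms(2-5)
proof (induction S arbitrary: f rule: finite_induct)
  case empty
  then show ?case by simp
next
  case (insert r S)
  define q where "q = synthetic_div f r"
  have eq: "poly f y = (y - r) * poly q y + poly f r" for y
  proof -
    have "poly ([:-r, 1:] * q + [:poly f r:]) y = poly f y"
      using synthetic_div_correct'[of r f] by (simp add: q_def)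
    then show ?thesis by (simp add: algebra_simps)
  qed
  have fr: "[poly f r = 0] (mod p)" using insert by auto
  have qS: "\<forall>s\<in>S. [poly q s = 0] (mod p)"
  proof
    fix s assume s: "s \<in> S"
    have "[poly f s = 0] (mod p)" using insert s by auto
    hence "[(s - r) * poly q s + poly f r = 0] (mod p)" by (simp only: eq[of s])
    hence "[(s - r) * poly q s + poly f r - poly f r = 0 - 0] (mod p)"
      using cong_diff fr by blast
    hence "p dvd (s - r) * poly q s" by (simp add: cong_0_iff)
    moreover have "\<not> [s = r] (mod p)" using insert s by auto
    ultimately show "[poly q s = 0] (mod p)"
      using assms(1) by (auto simp: cong_0_iff cong_iff_dvd_diff prime_dvd_mult_iff)
  qed
  have "q = 0 \<or> degree q < card S"
  proof (cases "degree f = 0")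
    case True then show ?thesis by (simp add: q_def synthetic_div_eq_0_iff)
  next
    case False
    then have "f \<noteq> 0" by auto
    then show ?thesis using insert False by (simp add: q_def degree_synthetic_div less_diff_conv2)
  qed
  then have "[poly q x = 0] (mod p)" using insert qS by auto
  then show ?case using eq[of x] fr
  proof -
    have "[(x - r) * poly q x + poly f r = (x - r) * 0 + 0] (mod p)"
      by (intro cong_add cong_mult cong_refl) fact+
    then show ?thesis by (simp only: eq[of x] mult_zero_right add_0_right)
  qed
qed

lemma card_roots_le:
  fixes p c :: int
  assumes "prime p" "finite S" "m \<ge> 1" "\<forall>s\<in>S. [s ^ m = c] (mod p)" "\<not> [c = 0] (mod p)"
    "\<forall>s\<in>S. \<forall>t\<in>S. [s = t] (mod p) \<longrightarrow> s = t"
  shows "card S \<le> m"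
proof (rule ccontr)
  assume "\<not> card S \<le> m"
  define f :: "int poly" where "f = monom 1 m - [:c:]"
  have pf: "poly f y = y ^ m - c" for y by (simp add: f_def poly_monom)
  have "degree f \<le> m" unfolding f_def
    by (intro degree_diff_le) (auto simp: degree_monom_le)
  hence "f = 0 \<or> degree f < card S" using \<open>\<not> card S \<le> m\<close> by auto
  moreover have "\<forall>s\<in>S. [poly f s = 0] (mod p)"
    using assms(4) by (simp add: pf cong_iff_dvd_diff)
  ultimately have "[poly f 0 = 0] (mod p)"
    using poly_zero_mod[OF assms(1,2) _ assms(6)] by blast
  hence "[- c = 0] (mod p)" using assms(3) by (simp add: pf power_0_left)
  hence "[c = 0] (mod p)" by (simp add: cong_0_iff)
  with assms(5) show False by simp
qed

lemma prod_linear_mod: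
  fixes p c :: int
  assumes "prime p" "finite S" "card S = m" "m \<ge> 1" "\<forall>s\<in>S. [s ^ m = c] (mod p)"
    "\<forall>s\<in>S. \<forall>t\<in>S. [s = t] (mod p) \<longrightarrow> s = t"
  shows "[(\<Prod>s\<in>S. x - s) = x ^ m - c] (mod p)"
proof -
  define g :: "int poly" where "g = (\<Prod>s\<in>S. [:-s, 1:])"
  define f :: "int poly" where "f = g - (monom 1 m - [:c:])"
  have pg: "poly g y = (\<Prod>s\<in>S. y - s)" for y by (simp add: g_def poly_prod)
  have pf: "poly f y = (\<Prod>s\<in>S. y - s) - (y ^ m - c)" for y by (simp add: f_def pg poly_monom)
  have dg: "degree g = m" unfolding g_def
    by (subst degree_prod_eq_sum_degree) (auto simp: assms(3))
  have lg: "lead_coeff g = 1" unfolding g_def by (simp add: lead_coeff_prod)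
  have "degree f \<le> m" unfolding f_def
    by (intro degree_diff_le) (auto simp: degree_monom_le dg)
  moreover have "coeff f m = 0" using lg dg assms(4) by (cases m) (simp_all add: f_def)
  ultimately have "f = 0 \<or> degree f < m"
    by (metis le_neq_implies_less leading_coeff_0_iff)
  moreover have "\<forall>s\<in>S. [poly f s = 0] (mod p)"
  proof
    fix s assume "s \<in> S"
    then have "(\<Prod>t\<in>S. s - t) = (0::int)" using assms(2) by (intro prod_zero) auto
    moreover have "[s ^ m - c = 0] (mod p)" using assms(5) \<open>s \<in> S\<close> by (simp add: cong_iff_dvd_diff)
    ultimately show "[poly f s = 0] (mod p)" unfolding pf
      by (metis cong_diff_iff_cong_0 cong_sym diff_0)
  qed
  ultimately have "[poly f x = 0] (mod p)"
    using poly_zero_mod[OF assms(1,2) _ assms(6)] assms(3) by blast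
  then show ?thesis unfolding pf by (simp add: cong_iff_dvd_diff)
qed

definition V :: "int set \<Rightarrow> int" where
  "V S = (\<Prod>(x,y)\<in>{(x,y). x \<in> S \<and> y \<in> S \<and> x < y}. y - x)"

lemma V_sorted:
  assumes "finite S"
  shows "(\<Prod>k<card S. \<Prod>j<k. sorted_list_of_set S ! k - sorted_list_of_set S ! j) = V S"
proof -
  define a where "a = sorted_list_of_set S"
  define N where "N = card S"
  have len: "length a = N" using assms by (simp add: a_def N_def length_sorted_list_of_set)
  have sa: "set a = S" using assms by (simp add: a_def set_sorted_list_of_set)
  have st: "sorted_wrt (<) a" using assms by (simp add: a_def strict_sorted_list_of_set)
  have da: "distinct a" and so: "sorted a" using st by (auto simp: strict_sorted_iff)
  have lt: "a ! j < a ! k" if "j < k" "k < N" for j k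
    using sorted_wrt_nth_less[OF st] that len by auto
  have bij: "bij_betw (\<lambda>(k,j). (a!j, a!k)) (SIGMA k:{..<N}. {..<k}) {(x,y). x \<in> S \<and> y \<in> S \<and> x < y}"
    unfolding bij_betw_def
  proof
    show "inj_on (\<lambda>(k,j). (a!j, a!k)) (SIGMA k:{..<N}. {..<k})"
      by (auto simp: inj_on_def nth_eq_iff_index_eq[OF da] len)
    show "(\<lambda>(k,j). (a!j, a!k)) ` (SIGMA k:{..<N}. {..<k}) = {(x,y). x \<in> S \<and> y \<in> S \<and> x < y}"
    proof (intro equalityI subsetI)
      fix z assume "z \<in> (\<lambda>(k,j). (a!j, a!k)) ` (SIGMA k:{..<N}. {..<k})"
      then show "z \<in> {(x,y). x \<in> S \<and> y \<in> S \<and> x < y}"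
        using lt len sa by (auto simp flip: sa)
    next
      fix z assume "z \<in> {(x,y). x \<in> S \<and> y \<in> S \<and> x < y}"
      then obtain x y where z: "z = (x,y)" "x \<in> S" "y \<in> S" "x < y" by auto
      obtain j where j: "j < N" "a ! j = x" using z sa len by (metis in_set_conv_nth)
      obtain k where k: "k < N" "a ! k = y" using z sa len by (metis in_set_conv_nth)
      have "j < k"
      proof (rule ccontr)
        assume "\<not> j < k"
        then have "a ! k \<le> a ! j" using sorted_nth_mono[OF so] j len by auto
        then show False using j k z by auto
      qed
      then show "z \<in> (\<lambda>(k,j). (a!j, a!k)) ` (SIGMA k:{..<N}. {..<k})"
        using j k z by (auto intro!: image_eqI[where x="(k,j)"])
    qed
  qed
  have "(\<Prod>k<N. \<Prod>j<k. a ! k - a ! j) = (\<Prod>(k,j)\<in>(SIGMA k:{..<N}. {..<k}). a ! k - a ! j)"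
    by (simp add: prod.Sigma)
  also have "\<dots> = (\<Prod>(x,y)\<in>{(x,y). x \<in> S \<and> y \<in> S \<and> x < y}. y - x)"
    using prod.reindex_bij_betw[OF bij, of "\<lambda>(x,y). y - x"]
    by (simp add: case_prod_beta')
  finally show ?thesis by (simp add: V_def a_def N_def)
qed

lemma V_union:
  assumes "finite S" "finite T" "S \<inter> T = {}"
  shows "V (S \<union> T) = V S * V T * (\<Prod>x\<in>S. \<Prod>y\<in>T. \<bar>y - x\<bar>)"
proof -
  define P where "P U = {(x,y). x \<in> U \<and> y \<in> U \<and> x < y}" for U :: "int set"
  define M where "M = {(x,y). x < y \<and> ((x \<in> S \<and> y \<in> T) \<or> (x \<in> T \<and> y \<in> S))}"
  have fin: "finite (P U)" if "finite U" for U
    by (rule finite_subset[of _ "U \<times> U"]) (auto simp: P_def that)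
  have finM: "finite M"
    by (rule finite_subset[of _ "(S \<union> T) \<times> (S \<union> T)"]) (auto simp: M_def assms)
  have eq: "P (S \<union> T) = (P S \<union> P T) \<union> M" by (auto simp: P_def M_def)
  have d1: "P S \<inter> P T = {}" using assms(3) by (auto simp: P_def)
  have d2: "(P S \<union> P T) \<inter> M = {}" using assms(3) by (auto simp: P_def M_def)
  have bij: "bij_betw (\<lambda>(s,t). (min s t, max s t)) (S \<times> T) M"
    unfolding bij_betw_def
  proof
    show "inj_on (\<lambda>(s,t). (min s t, max s t)) (S \<times> T)"
      using assms(3) by (auto simp: inj_on_def min_def max_def split: if_splits)
    show "(\<lambda>(s,t). (min s t, max s t)) ` (S \<times> T) = M"
    proof (intro equalityI subsetI)
      fix z assume "z \<in> (\<lambda>(s,t). (min s t, max s t)) ` (S \<times> T)"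
      then show "z \<in> M" using assms(3) by (auto simp: M_def min_def max_def le_less)
    next
      fix z assume "z \<in> M"
      then obtain x y where z: "z = (x,y)" "x < y" "(x \<in> S \<and> y \<in> T) \<or> (x \<in> T \<and> y \<in> S)"
        by (auto simp: M_def)
      then show "z \<in> (\<lambda>(s,t). (min s t, max s t)) ` (S \<times> T)"
      proof (elim disjE conjE)
        assume "x \<in> S" "y \<in> T" then show ?thesis using z
          by (auto intro!: image_eqI[where x="(x,y)"])
      next
        assume "x \<in> T" "y \<in> S" then show ?thesis using z
          by (auto intro!: image_eqI[where x="(y,x)"])
      qed
    qed
  qed
  have "(\<Prod>z\<in>S \<times> T. max (fst z) (snd z) - min (fst z) (snd z)) = (\<Prod>z\<in>M. snd z - fst z)"
    using prod.reindex_bij_betw[OF bij, of "\<lambda>(x,y). y - x"]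
    by (simp add: case_prod_beta')
  moreover have "(\<Prod>z\<in>S \<times> T. max (fst z) (snd z) - min (fst z) (snd z)) = (\<Prod>(s,t)\<in>S \<times> T. \<bar>t - s\<bar>)"
    by (intro prod.cong) (auto simp: max_def min_def)
  moreover have "(\<Prod>z\<in>M. snd z - fst z) = (\<Prod>(x,y)\<in>M. y - x)"
    by (simp add: case_prod_beta')
  ultimately have "(\<Prod>(x,y)\<in>M. y - x) = (\<Prod>(s,t)\<in>S \<times> T. \<bar>t - s\<bar>)" by simp
  also have "\<dots> = (\<Prod>x\<in>S. \<Prod>y\<in>T. \<bar>y - x\<bar>)"
    by (simp add: prod.cartesian_product)
  finally have cross: "(\<Prod>(x,y)\<in>M. y - x) = (\<Prod>x\<in>S. \<Prod>y\<in>T. \<bar>y - x\<bar>)" .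
  have "V (S \<union> T) = (\<Prod>(x,y)\<in>P (S \<union> T). y - x)" by (simp add: V_def P_def)
  also have "\<dots> = (\<Prod>(x,y)\<in>P S. y - x) * (\<Prod>(x,y)\<in>P T. y - x) * (\<Prod>(x,y)\<in>M. y - x)"
    unfolding eq
    by (simp add: prod.union_disjoint fin finM assms d1 d2)
  finally show ?thesis using cross by (simp add: V_def P_def)
qed

lemma prod_Icc_int_fact: "(\<Prod>x\<in>{1..int m}. x) = fact m"
proof (induction m)
  case 0 then show ?case by simp
next
  case (Suc m)
  have "{1..int (Suc m)} = insert (int m + 1) {1..int m}" by auto
  then show ?case using Suc by (simp add: algebra_simps)
qed

lemma prod_rev_fact: "(\<Prod>x\<in>{1..int m}. int m + 1 - x) = fact m"
proof -
  have img: "(\<lambda>x. int m + 1 - x) ` {1..int m} = {1..int m}"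
  proof (intro equalityI subsetI)
    fix y assume "y \<in> {1..int m}"
    then show "y \<in> (\<lambda>x. int m + 1 - x) ` {1..int m}"
      by (intro image_eqI[where x="int m + 1 - y"]) auto
  qed auto
  have inj: "inj_on (\<lambda>x. int m + 1 - x) {1..int m}" by (auto simp: inj_on_def)
  have "(\<Prod>x\<in>{1..int m}. x) = (\<Prod>x\<in>(\<lambda>x. int m + 1 - x) ` {1..int m}. x)" using img by simp
  also have "\<dots> = (\<Prod>x\<in>{1..int m}. int m + 1 - x)"
    using prod.reindex[OF inj, of "\<lambda>x. x"] by (simp only: comp_def)
  finally show ?thesis using prod_Icc_int_fact by simp
qed

lemma V_single: "V {x} = 1"
proof -
  have "{(a, b). a \<in> {x} \<and> b \<in> {x} \<and> a < b} = ({}::(int\<times>int) set)" by auto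
  then show ?thesis unfolding V_def by (simp only:) simp
qed

lemma V_Icc: "V {1..int m} = (\<Prod>k<m. fact k)"
proof (induction m)
  case 0 then show ?case by (simp add: V_def)
next
  case (Suc m)
  have e: "{1..int (Suc m)} = {1..int m} \<union> {int m + 1}" by auto
  have "V {1..int (Suc m)} = V {1..int m} * V {int m + 1} * (\<Prod>x\<in>{1..int m}. \<Prod>y\<in>{int m + 1}. \<bar>y - x\<bar>)"
    unfolding e by (rule V_union) auto
  also have "(\<Prod>x\<in>{1..int m}. \<Prod>y\<in>{int m + 1}. \<bar>y - x\<bar>) = (\<Prod>x\<in>{1..int m}. int m + 1 - x)"
    by (intro prod.cong) auto
  finally show ?case using Suc by (simp add: V_single prod_rev_fact)
qed

lemma fact_pair:
  fixes q :: nat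
  assumes "prime q" "j < q"
  shows "[fact j * fact (q - 1 - j) = (-1::int) ^ (j + 1)] (mod int q)"
  using assms(2)
proof (induction j)
  case 0
  then show ?case using wilson_theorem[OF assms(1)] by simp
next
  case (Suc j)
  have IH: "[fact j * fact (q - 1 - j) = (-1::int) ^ (j + 1)] (mod int q)" using Suc by simp
  define X :: int where "X = fact (Suc j) * fact (q - 1 - Suc j)"
  have qs: "q - 1 - j = Suc (q - 1 - Suc j)" using Suc.prems by simp
  have e1: "int (q - 1 - j) * X = int (Suc j) * (fact j * fact (q - 1 - j))"
  proof -
    have g: "int (Suc r) * (fact (Suc j) * fact r) = int (Suc j) * (fact j * fact (Suc r))" for r
      by (simp add: fact_Suc algebra_simps)
    show ?thesis unfolding X_def qs by (rule g)
  qed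
  have e2: "[int (q - 1 - j) = - int (Suc j)] (mod int q)"
    using Suc.prems by (simp add: cong_iff_dvd_diff of_nat_diff)
  have "[int (q - 1 - j) * X = - int (Suc j) * X] (mod int q)"
    by (rule cong_mult[OF e2 cong_refl])
  hence "[- int (Suc j) * X = int (Suc j) * (-1) ^ (j + 1)] (mod int q)"
    using e1 IH by (metis cong_scalar_left cong_sym cong_trans)
  hence "[int (Suc j) * (- X) = int (Suc j) * (-1) ^ (j + 1)] (mod int q)" by (simp only: mult_minus_left mult_minus_right)
  moreover have "coprime (int (Suc j)) (int q)"
  proof -
    have "\<not> q dvd Suc j" using Suc.prems by (auto dest: dvd_imp_le)
    then have "coprime q (Suc j)" using assms(1) by (simp add: prime_imp_coprime)
    then show ?thesis by (metis coprime_commute coprime_int_iff)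
  qed
  ultimately have "[- X = (-1) ^ (j + 1)] (mod int q)" using cong_mult_lcancel by blast
  then have "[- (- X) = - ((-1) ^ (j + 1))] (mod int q)" by (rule cong_minus_minus_iff[THEN iffD2])
  then show ?case by (simp add: X_def)
qed

lemma D_mod:
  fixes q n :: nat
  assumes "prime q" "q = 2 * n + 1"
  shows "[(\<Prod>k<2*n. fact k) = fact n * (-1::int) ^ (\<Sum>j\<in>{1..<n}. j + 1)] (mod int q)"
proof -
  have "n \<ge> 1" using prime_gt_1_nat[OF assms(1)] assms(2) by simp
  have s1: "{..<2*n} = {..<n} \<union> ({n} \<union> {n+1..<2*n})" using \<open>n \<ge> 1\<close> by auto
  have "(\<Prod>k<2*n. fact k :: int) = (\<Prod>k<n. fact k) * (fact n * (\<Prod>k\<in>{n+1..<2*n}. fact k))"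
    unfolding s1 by (subst prod.union_disjoint, auto)+
  also have "(\<Prod>k<n. fact k :: int) = (\<Prod>j\<in>{1..<n}. fact j)"
  proof (cases n)
    case 0 then show ?thesis by simp
  next
    case (Suc n')
    have "{..<n} = insert 0 {1..<n}" using Suc by auto
    then show ?thesis by simp
  qed
  also have "(\<Prod>k\<in>{n+1..<2*n}. fact k :: int) = (\<Prod>j\<in>{1..<n}. fact (2*n - j))"
    by (rule prod.reindex_bij_witness[where i="\<lambda>j. 2*n - j" and j="\<lambda>k. 2*n - k"]) (use \<open>n \<ge> 1\<close> in auto)
  finally have "(\<Prod>k<2*n. fact k :: int) = fact n * (\<Prod>j\<in>{1..<n}. fact j * fact (2*n - j))"
    by (simp add: prod.distrib algebra_simps)
  moreover have "[(\<Prod>j\<in>{1..<n}. fact j * fact (2*n - j)) = (\<Prod>j\<in>{1..<n}. (-1::int) ^ (j + 1))] (mod int q)"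
  proof (rule cong_prod)
    fix j assume "j \<in> {1..<n}"
    then show "[fact j * fact (2*n - j) = (-1::int) ^ (j + 1)] (mod int q)"
      using fact_pair[OF assms(1), of j] assms(2) by simp
  qed
  ultimately show ?thesis
    by (simp add: power_sum cong_scalar_left)
qed

lemma two_pow:
  fixes q n :: nat
  assumes "prime q" "q = 2 * n + 1"
  shows "[2 ^ n = (-1::int) ^ (n - n div 2)] (mod int q)"
proof -
  have "n \<ge> 1" using prime_gt_1_nat[OF assms(1)] assms(2) by simp
  have nz: "\<not> [2 = 0] (mod int q)"
  proof
    assume "[2 = 0] (mod int q)"
    then have "int q dvd 2" by (simp add: cong_0_iff)
    then show False using assms(2) \<open>n \<ge> 1\<close> by (auto dest: zdvd_imp_le)
  qed
  interpret G: GAUSS q 2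
    by unfold_locales (use assms \<open>n \<ge> 1\<close> nz in auto)
  have h: "(int q - 1) div 2 = int n" using assms(2) by simp
  have E: "G.E = (\<lambda>x. x * 2) ` {int (n div 2) + 1..int n}"
  proof -
    have C: "G.C = G.B"
    proof -
      have "x mod int q = x" if "x \<in> G.B" for x
      proof -
        from that obtain y where y: "y \<in> G.A" "x = y * 2" unfolding G.B_def by auto
        then have "0 < y" "y \<le> int n" unfolding G.A_def h by auto
        then show ?thesis using y(2) assms(2) by (intro mod_pos_pos_trivial) auto
      qed
      then show ?thesis unfolding G.C_def by (simp add: image_cong)
    qed
    show ?thesis unfolding G.E_def C G.B_def G.A_def h
      by (auto simp: image_iff)
  qed
  have "card G.E = card {int (n div 2) + 1..int n}"
    unfolding E by (rule card_image) (auto simp: inj_on_def)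
  also have "\<dots> = n - n div 2" by simp
  finally have cE: "card G.E = n - n div 2" .
  have "[Legendre 2 (int q) = 2 ^ ((q - 1) div 2)] (mod int q)"
    using euler_criterion[OF assms(1)] assms(2) \<open>n \<ge> 1\<close> by simp
  then show ?thesis using G.gauss_lemma cE assms(2) by (simp add: cong_sym)
qed



lemma E1_parity: "(n::nat) \<ge> 1 \<Longrightarrow> even (\<Sum>j\<in>{1..<n}. j + 1) \<longleftrightarrow> (n mod 4 = 1 \<or> n mod 4 = 2)"
proof (induction n rule: nat_induct_at_least)
  case base then show ?case by simp
next
  case (Suc n)
  have "(\<Sum>j\<in>{1..<Suc n}. j + 1) = (\<Sum>j\<in>{1..<n}. j + 1) + (n + 1)"
    using Suc.hyps by (simp add: sum.atLeastLessThan_Suc)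
  then show ?case using Suc.IH by presburger
qed

lemma abs_prod_sign:
  fixes S T :: "int set"
  assumes "finite S" "finite T" "S \<inter> T = {}"
  shows "(\<Prod>x\<in>S. \<Prod>y\<in>T. \<bar>y - x\<bar>) = (-1) ^ card {z\<in>S \<times> T. fst z < snd z} * (\<Prod>x\<in>S. \<Prod>y\<in>T. x - y)"
proof -
  have "(\<Prod>x\<in>S. \<Prod>y\<in>T. \<bar>y - x\<bar>) = (\<Prod>z\<in>S \<times> T. \<bar>snd z - fst z\<bar>)"
    by (simp add: prod.cartesian_product case_prod_beta')
  also have "\<dots> = (\<Prod>z\<in>S \<times> T. (if fst z < snd z then -1 else 1) * (fst z - snd z))"
  proof (rule prod.cong)
    fix z assume "z \<in> S \<times> T"
    then have "fst z \<noteq> snd z" using assms(3) by auto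
    then show "\<bar>snd z - fst z\<bar> = (if fst z < snd z then -1 else 1) * (fst z - snd z)" by auto
  qed simp
  also have "\<dots> = (\<Prod>z\<in>S \<times> T. (if fst z < snd z then -1 else 1)) * (\<Prod>z\<in>S \<times> T. fst z - snd z)"
    by (rule prod.distrib)
  also have "(\<Prod>z\<in>S \<times> T. (if fst z < snd z then -1 else 1 :: int)) = (-1) ^ card {z\<in>S \<times> T. fst z < snd z}"
  proof -
    have "(\<Prod>z\<in>S \<times> T. (if fst z < snd z then -1 else 1 :: int)) = (\<Prod>z\<in>{z\<in>S \<times> T. fst z < snd z}. -1)"
      using assms(1,2) by (subst prod.inter_filter) auto
    then show ?thesis by simp
  qed
  also have "(\<Prod>z\<in>S \<times> T. fst z - snd z) = (\<Prod>x\<in>S. \<Prod>y\<in>T. x - y)"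
    by (simp add: prod.cartesian_product case_prod_beta')
  finally show ?thesis .
qed

lemma card_pairs_even:
  fixes S T :: "int set" and p :: int
  assumes "finite S" "finite T" "S \<inter> T = {}" "\<forall>x\<in>S. p - x \<in> S" "\<forall>y\<in>T. p - y \<in> T"
  shows "2 * card {z\<in>S \<times> T. fst z < snd z} = card S * card T"
proof -
  define X where "X = {z\<in>S \<times> T. fst z < snd z}"
  define Y where "Y = {z\<in>S \<times> T. snd z < fst z}"
  have bij: "bij_betw (\<lambda>z. (p - fst z, p - snd z)) X Y"
    by (rule bij_betw_byWitness[where f'="\<lambda>z. (p - fst z, p - snd z)"]) (use assms in \<open>auto simp: X_def Y_def\<close>)
  have "card X = card Y" using bij_betw_same_card[OF bij] .
  moreover have "X \<union> Y = S \<times> T" using assms(3) by (auto simp: X_def Y_def)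
  moreover have "X \<inter> Y = {}" by (auto simp: X_def Y_def)
  moreover have "finite X" "finite Y" using assms(1,2) by (auto simp: X_def Y_def)
  ultimately have "card X + card Y = card S * card T"
    by (metis card_Un_disjoint card_cartesian_product)
  then show ?thesis using \<open>card X = card Y\<close> by (simp add: X_def)
qed

lemma card_pairs_odd:
  fixes S T :: "int set" and p :: int
  assumes "finite S" "finite T" "\<forall>x\<in>S. p - x \<in> T" "\<forall>y\<in>T. p - y \<in> S"
  shows "\<exists>c. card {z\<in>S \<times> T. fst z < snd z} = 2 * c + card {x\<in>S. 2 * x < p}"
proof -
  define X where "X = {z\<in>S \<times> T. fst z < snd z}"
  define X1 where "X1 = {z\<in>X. fst z + snd z < p}"
  define X2 where "X2 = {z\<in>X. fst z + snd z > p}"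
  define F where "F = {z\<in>X. fst z + snd z = p}"
  have finX: "finite X" using assms(1,2) by (auto simp: X_def)
  have bij: "bij_betw (\<lambda>z. (p - snd z, p - fst z)) X1 X2"
    by (rule bij_betw_byWitness[where f'="\<lambda>z. (p - snd z, p - fst z)"]) (use assms in \<open>auto simp: X_def X1_def X2_def\<close>)
  have c12: "card X1 = card X2" using bij_betw_same_card[OF bij] .
  have FI: "F = (\<lambda>x. (x, p - x)) ` {x\<in>S. 2 * x < p}"
  proof (intro equalityI subsetI)
    fix z assume "z \<in> F"
    then show "z \<in> (\<lambda>x. (x, p - x)) ` {x\<in>S. 2 * x < p}"
      by (auto simp: F_def X_def intro!: image_eqI[where x="fst z"])
  next
    fix z assume "z \<in> (\<lambda>x. (x, p - x)) ` {x\<in>S. 2 * x < p}"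
    then show "z \<in> F" using assms(3) by (auto simp: F_def X_def)
  qed
  have cF: "card F = card {x\<in>S. 2 * x < p}"
    unfolding FI by (rule card_image) (auto simp: inj_on_def)
  have "X = (X1 \<union> X2) \<union> F" by (auto simp: X1_def X2_def F_def)
  moreover have "finite X1" "finite X2" "finite F" using finX by (auto simp: X1_def X2_def F_def)
  moreover have "X1 \<inter> X2 = {}" "(X1 \<union> X2) \<inter> F = {}" by (auto simp: X1_def X2_def F_def)
  ultimately have "card X = card X1 + card X2 + card F"
    by (simp add: card_Un_disjoint)
  then have "card X = 2 * card X1 + card {x\<in>S. 2 * x < p}" using c12 cF by simp
  then show ?thesis unfolding X_def by blast
qed

lemma fact_sign_odd:
  fixes SA SB :: "int set" and p :: int and n :: nat
  assumes "p = 2 * int n + 1" "SA \<union> SB = {1..int (2*n)}" "SA \<inter> SB = {}"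
    "\<forall>x\<in>SA. p - x \<in> SB" "\<forall>x\<in>SB. p - x \<in> SA" "[(\<Prod>x\<in>SA. x) = 1] (mod p)"
  shows "[fact n = (-1::int) ^ card {x\<in>SB. x \<le> int n}] (mod p)"
    "card {x\<in>SA. 2 * x < p} + card {x\<in>SB. x \<le> int n} = n"
proof -
  define LA where "LA = {x\<in>SA. x \<le> int n}"
  define LB where "LB = {x\<in>SB. x \<le> int n}"
  define HA where "HA = {x\<in>SA. x > int n}"
  have finSA: "finite SA" and finSB: "finite SB"
    using assms(2) by (metis finite_Un finite_atLeastAtMost_int)+
  have finLA: "finite LA" and finLB: "finite LB" and finHA: "finite HA"
    using finSA finSB by (auto simp: LA_def LB_def HA_def)
  have LAe: "{x\<in>SA. 2 * x < p} = LA" using assms(1) by (auto simp: LA_def)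
  have LU: "LA \<union> LB = {1..int n}" using assms(2) by (auto simp: LA_def LB_def)
  have LD: "LA \<inter> LB = {}" using assms(3) by (auto simp: LA_def LB_def)
  have "card LA + card LB = n" using card_Un_disjoint[OF finLA finLB LD] LU by simp
  then show "card {x\<in>SA. 2 * x < p} + card {x\<in>SB. x \<le> int n} = n" using LAe by (simp add: LB_def)
  have SAe: "SA = LA \<union> HA" "LA \<inter> HA = {}" by (auto simp: LA_def HA_def)
  have HAe: "HA = (\<lambda>k. p - k) ` LB"
  proof (intro equalityI subsetI)
    fix x assume x: "x \<in> HA"
    then have "p - x \<in> LB" using assms(1,2,4) by (auto simp: HA_def LB_def)
    then show "x \<in> (\<lambda>k. p - k) ` LB" by (intro image_eqI[where x="p - x"]) auto
  next
    fix x assume "x \<in> (\<lambda>k. p - k) ` LB"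
    then obtain k where k: "k \<in> LB" "x = p - k" by auto
    then show "x \<in> HA" using assms(1,2,5) by (auto simp: HA_def LB_def)
  qed
  have "(\<Prod>x\<in>HA. x) = (\<Prod>k\<in>LB. p - k)"
    unfolding HAe by (subst prod.reindex) (auto simp: inj_on_def)
  moreover have "[(\<Prod>k\<in>LB. p - k) = (\<Prod>k\<in>LB. (-1) * k)] (mod p)"
    by (rule cong_prod) (simp add: cong_iff_dvd_diff)
  moreover have "(\<Prod>k\<in>LB. (-1) * k) = (-1) ^ card LB * (\<Prod>k\<in>LB. k)"
    by (simp only: prod.distrib prod_constant)
  ultimately have HAc: "[(\<Prod>x\<in>HA. x) = (-1) ^ card LB * (\<Prod>k\<in>LB. k)] (mod p)" by simp
  have "(\<Prod>x\<in>SA. x) = (\<Prod>x\<in>LA. x) * (\<Prod>x\<in>HA. x)"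
    unfolding SAe(1) by (rule prod.union_disjoint[OF finLA finHA SAe(2)])
  then have "[(\<Prod>x\<in>SA. x) = (\<Prod>x\<in>LA. x) * ((-1) ^ card LB * (\<Prod>k\<in>LB. k))] (mod p)"
    using HAc by (simp add: cong_scalar_left)
  moreover have "(\<Prod>x\<in>LA. x) * ((-1) ^ card LB * (\<Prod>k\<in>LB. k)) = (-1) ^ card LB * fact n"
  proof -
    have "(\<Prod>x\<in>LA. x) * (\<Prod>k\<in>LB. k) = (\<Prod>x\<in>{1..int n}. x)"
      unfolding LU[symmetric] by (rule prod.union_disjoint[symmetric, OF finLA finLB LD])
    then show ?thesis using prod_Icc_int_fact[of n] by (simp add: algebra_simps)
  qed
  ultimately have "[(-1) ^ card LB * fact n = (1::int)] (mod p)"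
    using assms(6) by (metis cong_sym cong_trans)
  then have "[(-1) ^ card LB * ((-1) ^ card LB * fact n) = (-1) ^ card LB * (1::int)] (mod p)"
    by (rule cong_scalar_left)
  moreover have "(-1::int) ^ card LB * ((-1) ^ card LB * fact n) = fact n"
    by (simp add: mult.assoc[symmetric] power_add[symmetric])
  ultimately show "[fact n = (-1::int) ^ card {x\<in>SB. x \<le> int n}] (mod p)" by (simp add: LB_def)
qed

theorem corollary3p1:
  fixes p :: int and n :: nat
  assumes "prime p" and "p = 2 * int n + 1"
  defines "a \<equiv> qr_list p" and "b \<equiv> qnr_list p"
  shows "[(\<Prod>k<n. \<Prod>j<k. (a ! k - a ! j) * (b ! k - b ! j))
           = (if [p = 1] (mod 4) then - fact n else 1)] (mod p)"
proof -
  define q where "q = nat p"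
  have p1: "p > 1" using assms(1) prime_gt_1_int by blast
  have pq: "p = int q" using p1 q_def by simp
  have q2: "q = 2 * n + 1" using assms(2) pq by linarith
  have pr: "prime q" using assms(1) pq by simp
  have n1: "n \<ge> 1" using prime_gt_1_nat[OF pr] q2 by simp
  define SA where "SA = {x\<in>{1..p-1}. QuadRes p x}"
  define SB where "SB = {x\<in>{1..p-1}. \<not> QuadRes p x}"
  have a': "a = sorted_list_of_set SA" by (simp add: a_def qr_list_def SA_def)
  have b': "b = sorted_list_of_set SB" by (simp add: b_def qnr_list_def SB_def)
  have finA: "finite SA" unfolding SA_def by (rule finite_subset[of _ "{1..p-1}"]) auto
  have finB: "finite SB" unfolding SB_def by (rule finite_subset[of _ "{1..p-1}"]) auto
  have un: "SA \<union> SB = {1..int (2*n)}" using assms(2) by (auto simp: SA_def SB_def)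
  have dis: "SA \<inter> SB = {}" by (auto simp: SA_def SB_def)
  have inc0: "s = t" if "s \<in> {1..p-1}" "t \<in> {1..p-1}" "[s = t] (mod p)" for s t
  proof -
    have "s mod p = s" "t mod p = t" using that by (auto intro: mod_pos_pos_trivial)
    then show ?thesis using that(3) by (simp add: cong_def)
  qed
  have incA: "\<forall>s\<in>SA. \<forall>t\<in>SA. [s = t] (mod p) \<longrightarrow> s = t" using inc0 by (auto simp: SA_def)
  have incB: "\<forall>s\<in>SB. \<forall>t\<in>SB. [s = t] (mod p) \<longrightarrow> s = t" using inc0 by (auto simp: SB_def)
  have ne: "\<not> [1 = -1] (mod p)"
  proof
    assume "[1 = -1] (mod p)"
    then have "p dvd 2" by (simp add: cong_iff_dvd_diff)
    then show False using assms(2) n1 by (auto dest: zdvd_imp_le)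
  qed
  have leg: "[Legendre x p = x ^ n] (mod p)" for x
    using euler_criterion[OF pr, of x] pq q2 n1 by simp
  have nz: "\<not> [x = 0] (mod p)" if "x \<in> {1..p-1}" for x
    using inc0[of x p] that by (auto simp: cong_def)
  have resA: "\<forall>x\<in>SA. [x ^ n = 1] (mod p)"
  proof
    fix x assume x: "x \<in> SA"
    then have "Legendre x p = 1" using nz[of x] by (auto simp: SA_def Legendre_def)
    then show "[x ^ n = 1] (mod p)" using leg[of x] by (simp add: cong_sym)
  qed
  have resB: "\<forall>x\<in>SB. [x ^ n = -1] (mod p)"
  proof
    fix x assume x: "x \<in> SB"
    then have "Legendre x p = -1" using nz[of x] by (auto simp: SB_def Legendre_def)
    then show "[x ^ n = -1] (mod p)" using leg[of x] by (simp add: cong_sym)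
  qed
  have memA: "y \<in> SA" if "y \<in> {1..p-1}" "[y ^ n = 1] (mod p)" for y
  proof (rule ccontr)
    assume "y \<notin> SA"
    then have "y \<in> SB" using that by (auto simp: SA_def SB_def)
    then have "[y ^ n = -1] (mod p)" using resB by auto
    then show False using that(2) ne by (metis cong_sym cong_trans)
  qed
  have memB: "y \<in> SB" if "y \<in> {1..p-1}" "[y ^ n = -1] (mod p)" for y
  proof (rule ccontr)
    assume "y \<notin> SB"
    then have "y \<in> SA" using that by (auto simp: SA_def SB_def)
    then have "[y ^ n = 1] (mod p)" using resA by auto
    then show False using that(2) ne by (metis cong_sym cong_trans)
  qed
  have neg: "[(p - x) ^ n = (-1) ^ n * x ^ n] (mod p)" for x
  proof -
    have "[p - x = - x] (mod p)" by (simp add: cong_iff_dvd_diff)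
    then have "[(p - x) ^ n = (- x) ^ n] (mod p)" by (rule cong_pow)
    then show ?thesis by (simp only: power_minus[of x n])
  qed
  have rngA: "x \<in> SA \<Longrightarrow> p - x \<in> {1..p-1}" for x by (auto simp: SA_def)
  have rngB: "x \<in> SB \<Longrightarrow> p - x \<in> {1..p-1}" for x by (auto simp: SB_def)
  have cA: "card SA \<le> n"
    by (rule card_roots_le[OF assms(1) finA n1 resA _ incA]) (use p1 in \<open>auto simp: cong_def\<close>)
  have cB: "card SB \<le> n"
    by (rule card_roots_le[OF assms(1) finB n1 resB _ incB]) (use p1 in \<open>auto simp: cong_def zmod_minus1\<close>)
  have "card SA + card SB = 2 * n"
    using card_Un_disjoint[OF finA finB dis] un by simp
  then have cardA: "card SA = n" and cardB: "card SB = n" using cA cB by auto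
  have P: "(\<Prod>k<n. \<Prod>j<k. (a ! k - a ! j) * (b ! k - b ! j)) = V SA * V SB"
    using V_sorted[OF finA] V_sorted[OF finB] cardA cardB unfolding a' b'
    by (simp add: prod.distrib)
  define N where "N = card {z\<in>SA \<times> SB. fst z < snd z}"
  define Pi where "Pi = (\<Prod>x\<in>SA. \<Prod>y\<in>SB. x - y)"
  have Vall: "V {1..int (2*n)} = V SA * V SB * ((-1) ^ N * Pi)"
    using V_union[OF finA finB dis] abs_prod_sign[OF finA finB dis] un
    by (simp add: N_def Pi_def)
  have Pi2: "[Pi = 2 ^ n] (mod p)"
  proof -
    have "[Pi = (\<Prod>x\<in>SA. 2)] (mod p)" unfolding Pi_def
    proof (rule cong_prod)
      fix x assume x: "x \<in> SA"
      have "[(\<Prod>y\<in>SB. x - y) = x ^ n - (-1)] (mod p)"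
        by (rule prod_linear_mod[OF assms(1) finB cardB n1 resB incB])
      moreover have "[x ^ n - (-1) = 1 - (-1)] (mod p)"
        using resA x by (intro cong_diff cong_refl) auto
      ultimately show "[(\<Prod>y\<in>SB. x - y) = 2] (mod p)" by (simp add: cong_trans)
    qed
    then show ?thesis using cardA by simp
  qed
  have tw: "[2 ^ n = (-1::int) ^ (n - n div 2)] (mod p)"
    using two_pow[OF pr q2] pq by simp
  define E1 where "E1 = (\<Sum>j\<in>{1..<n}. j + 1)"
  have D: "[V {1..int (2*n)} = fact n * (-1) ^ E1] (mod p)"
  proof -
    have "V {1..int (2*n)} = (\<Prod>k<2*n. fact k)" by (rule V_Icc)
    then show ?thesis using D_mod[OF pr q2] pq unfolding E1_def by simp
  qed
  define u :: int where "u = (-1) ^ N * (-1) ^ (n - n div 2)"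
  have uu: "u * u = 1"
  proof -
    have "u * u = ((-1) ^ N * (-1) ^ N) * ((-1) ^ (n - n div 2) * (-1) ^ (n - n div 2))"
      by (simp add: u_def algebra_simps)
    also have "\<dots> = 1" by (simp flip: power_add)
    finally show ?thesis .
  qed
  have key: "[V SA * V SB * u = fact n * (-1) ^ E1] (mod p)"
  proof -
    have "[V SA * V SB * ((-1) ^ N * Pi) = V SA * V SB * u] (mod p)"
      unfolding u_def using Pi2 tw by (intro cong_mult cong_refl) (rule cong_trans)
    then show ?thesis using Vall D by (metis cong_sym cong_trans)
  qed
  then have "[V SA * V SB * u * u = fact n * (-1) ^ E1 * u] (mod p)" by (rule cong_mult[OF _ cong_refl])
  then have key2': "[V SA * V SB * u * u = fact n * (-1) ^ E1 * u] (mod p)" by simp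
  have key2: "[V SA * V SB = fact n * (-1) ^ (E1 + N + (n - n div 2))] (mod p)"
  proof -
    have e: "V SA * V SB * u * u = V SA * V SB" using uu by (metis mult.assoc mult_1_right)
    have e2: "fact n * (-1) ^ E1 * u = fact n * (-1::int) ^ (E1 + N + (n - n div 2))"
      by (simp only: u_def power_add mult.assoc)
    show ?thesis using key2' unfolding e e2 .
  qed
  show ?thesis
  proof (cases "even n")
    case True
    have c4: "[p = 1] (mod 4)" using True assms(2) by (auto simp: cong_def elim!: evenE)
    have inv: "\<forall>x\<in>SA. p - x \<in> SA" "\<forall>y\<in>SB. p - y \<in> SB"
    proof -
      show "\<forall>x\<in>SA. p - x \<in> SA"
      proof
        fix x assume x: "x \<in> SA"
        have "[(p - x) ^ n = x ^ n] (mod p)" using neg[of x] True by simp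
        then have "[(p - x) ^ n = 1] (mod p)" using resA x by (blast intro: cong_trans)
        then show "p - x \<in> SA" using x rngA by (intro memA) auto
      qed
      show "\<forall>x\<in>SB. p - x \<in> SB"
      proof
        fix x assume x: "x \<in> SB"
        have "[(p - x) ^ n = x ^ n] (mod p)" using neg[of x] True by simp
        then have "[(p - x) ^ n = -1] (mod p)" using resB x by (blast intro: cong_trans)
        then show "p - x \<in> SB" using x rngB by (intro memB) auto
      qed
    qed
    have "2 * N = n * n" using card_pairs_even[OF finA finB dis inv] cardA cardB by (simp add: N_def)
    then have "even N" using True by (auto elim!: evenE)
    moreover have "odd E1 \<longleftrightarrow> n mod 4 = 0" using E1_parity[OF n1] True unfolding E1_def by presburger
    ultimately have "odd (E1 + N + (n - n div 2))" using True by presburger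
    then have "(-1::int) ^ (E1 + N + (n - n div 2)) = -1" by simp
    then show ?thesis using key2 c4 P by simp
  next
    case False
    have c4: "\<not> [p = 1] (mod 4)" using False assms(2) by (auto simp: cong_def elim!: oddE)
    have inv: "\<forall>x\<in>SA. p - x \<in> SB" "\<forall>y\<in>SB. p - y \<in> SA"
    proof -
      show "\<forall>x\<in>SA. p - x \<in> SB"
      proof
        fix x assume x: "x \<in> SA"
        have "[(p - x) ^ n = - (x ^ n)] (mod p)" using neg[of x] False by simp
        moreover have "[- (x ^ n) = - 1] (mod p)" using resA x by (simp add: cong_minus_minus_iff)
        ultimately have "[(p - x) ^ n = -1] (mod p)" by (rule cong_trans)
        then show "p - x \<in> SB" using x rngA by (intro memB) auto
      qed
      show "\<forall>x\<in>SB. p - x \<in> SA"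
      proof
        fix x assume x: "x \<in> SB"
        have "[(p - x) ^ n = - (x ^ n)] (mod p)" using neg[of x] False by simp
        moreover have "[- (x ^ n) = - (- 1)] (mod p)" using resB x by (subst cong_minus_minus_iff) blast
        ultimately have "[(p - x) ^ n = - (- 1)] (mod p)" by (rule cong_trans)
        then have "[(p - x) ^ n = 1] (mod p)" by simp
        then show "p - x \<in> SA" using x rngB by (intro memA) auto
      qed
    qed
    have prodA: "[(\<Prod>x\<in>SA. x) = 1] (mod p)"
    proof -
      have h: "[(\<Prod>s\<in>SA. 0 - s) = 0 ^ n - 1] (mod p)"
        by (rule prod_linear_mod[OF assms(1) finA cardA n1 resA incA])
      have "(\<Prod>s\<in>SA. 0 - s) = (\<Prod>s\<in>SA. (-1) * s)" by simp
      also have "\<dots> = (-1) ^ n * (\<Prod>s\<in>SA. s)" by (simp only: prod.distrib prod_constant cardA)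
      also have "\<dots> = - (\<Prod>s\<in>SA. s)" using False by simp
      finally have "[- (\<Prod>s\<in>SA. s) = - 1] (mod p)" using h n1 by (simp add: power_0_left)
      then show ?thesis by (simp add: cong_minus_minus_iff)
    qed
    obtain c where c: "N = 2 * c + card {x\<in>SA. 2 * x < p}"
      using card_pairs_odd[OF finA finB inv] unfolding N_def by blast
    note fs = fact_sign_odd[OF assms(2) un dis inv prodA]
    define t where "t = card {x\<in>SB. x \<le> int n}"
    have "E1 mod 2 = (if n mod 4 = 1 then 0 else 1)" using E1_parity[OF n1] False unfolding E1_def by presburger
    then have "even (t + (E1 + N + (n - n div 2)))" using False c fs(2) unfolding t_def by presburger
    then have EQ: "(-1::int) ^ t * (-1) ^ (E1 + N + (n - n div 2)) = 1" by (simp flip: power_add)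
    have M: "[fact n * (-1) ^ (E1 + N + (n - n div 2)) = (-1::int) ^ t * (-1) ^ (E1 + N + (n - n div 2))] (mod p)"
      using fs(1) unfolding t_def by (rule cong_mult[OF _ cong_refl])
    have "[V SA * V SB = (-1::int) ^ t * (-1) ^ (E1 + N + (n - n div 2))] (mod p)"
      by (rule cong_trans[OF key2 M])
    then show ?thesis using c4 P EQ by simp
  qed
qed

end
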